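(* Let $n\ge1$, let $K$ be the uniform Kasteleyn matrix of the Aztec diamond of size $n$, $G_n(\mathtt{w},\mathtt{b})=\sum_{x\in\mathtt{W},y\in\mathtt{B}}K^{-1}(x,y)w_1^{x_1}w_2^{x_2}b_1^{y_1}b_2^{y_2}$, and for $k,l\in\{0,1\}$ $$H^{k,l}_n(\mathtt{w},\mathtt{b})=\sum_{\substack{1\le x_1\le 2n-1,\ x_1\text{ odd}\\1\le y_2\le 2n-1,\ y_2\text{ odd}}}K^{-1}((x_1,2nk),(2nl,y_2))\,w_1^{x_1}w_2^{2nk}b_1^{2nl}b_2^{y_2}.$$ Then, writing $H^{k,l}_n=H^{k,l}_n(\mathtt{w},\mathtt{b})$ and $C(r_1,r_2)=1+r_1^2r_2^2+\mathrm{i}(r_1^2+r_2^2)$, $$\begin{aligned}G_n(\mathtt{w},\mathtt{b})=&\ \frac{w_1w_2^2b_2f_{n+1}(w_1^2b_1^2)f_n(w_2^2b_2^2)}{C(w_1,w_2)}\\&+(1+\mathrm{i}w_1^2)\frac{(1+\mathrm{i}b_2^2)H^{0,0}_n+b_1^2\big(b_2w_1f_n(b_1^2w_1^2)+(\mathrm{i}+b_2^2)H^{0,1}_n\big)}{C(w_1,w_2)C(b_1,b_2)}\\&+(\mathrm{i}+w_1^2)w_2^2\frac{b_1^2b_2^{2n+1}w_1w_2^{2n}f_n(b_1^2w_1^2)+(1+\mathrm{i}b_2^2)H^{1,0}_n+b_1^2(\mathrm{i}+b_2^2)H^{1,1}_n}{C(w_1,w_2)C(b_1,b_2)}.\end{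aligned}$$
   Context: $\mathrm{i}=\sqrt{-1}$. $\mathtt{W}=\{(x_1,x_2): x_1\text{ odd},\ x_2\text{ even},\ 1\le x_1\le 2n-1,\ 0\le x_2\le 2n\}$, $\mathtt{B}=\{(x_1,x_2): x_1\text{ even},\ x_2\text{ odd},\ 0\le x_1\le 2n,\ 1\le x_2\le 2n-1\}$, $e_1=(1,1)$, $e_2=(-1,1)$. The uniform Kasteleyn matrix has rows indexed by $\mathtt{B}$, columns by $\mathtt{W}$, and $K(x,y)=1$ if $x-y=\pm e_1$, $K(x,y)=\mathrm{i}$ if $x-y=\pm e_2$, $0$ otherwise. $f_n(t)=(1-t^n)/(1-t)$. *)

theory Defs
  imports Complex_Main
begin

definition Wset :: "nat \<Rightarrow> (int \<times> int) set" where
  "Wset n = {(x1, x2). odd x1 \<and> even x2 \<and> 1 \<le> x1 \<and> x1 \<le> 2 * int n - 1 \<and> 0 \<le> x2 \<and> x2 \<le> 2 * int n}"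

definition Bset :: "nat \<Rightarrow> (int \<times> int) set" where
  "Bset n = {(x1, x2). even x1 \<and> odd x2 \<and> 0 \<le> x1 \<and> x1 \<le> 2 * int n \<and> 1 \<le> x2 \<and> x2 \<le> 2 * int n - 1}"

definition Kast :: "nat \<Rightarrow> int \<times> int \<Rightarrow> int \<times> int \<Rightarrow> complex" where
  "Kast n x y =
     (if x \<in> Bset n \<and> y \<in> Wset n then
        (let d = (fst x - fst y, snd x - snd y) in
         if d = (1, 1) \<or> d = (-1, -1) then 1
         else if d = (-1, 1) \<or> d = (1, -1) then \<i>
         else 0)
      else 0)"

definition is_Kinv :: "nat \<Rightarrow> (int \<times> int \<Rightarrow> int \<times> int \<Rightarrow> complex) \<Rightarrow> bool" where
  "is_Kinv n M \<longleftrightarrow>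
     (\<forall>x y. (x \<notin> Wset n \<or> y \<notin> Bset n) \<longrightarrow> M x y = 0) \<and>
     (\<forall>x\<in>Wset n. \<forall>x'\<in>Wset n. (\<Sum>y\<in>Bset n. M x y * Kast n y x') = (if x = x' then 1 else 0)) \<and>
     (\<forall>y\<in>Bset n. \<forall>y'\<in>Bset n. (\<Sum>x\<in>Wset n. Kast n y x * M x y') = (if y = y' then 1 else 0))"

definition Kinv :: "nat \<Rightarrow> int \<times> int \<Rightarrow> int \<times> int \<Rightarrow> complex" where
  "Kinv n = (THE M. is_Kinv n M)"

text \<open>f_n(t) = (1 - t^n)/(1 - t), as the polynomial 1 + t + ... + t^(n-1).\<close>
definition fpoly :: "nat \<Rightarrow> complex \<Rightarrow> complex" where
  "fpoly n t = (\<Sum>k<n. t ^ k)"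

definition Cfun :: "complex \<Rightarrow> complex \<Rightarrow> complex" where
  "Cfun r1 r2 = 1 + r1^2 * r2^2 + \<i> * (r1^2 + r2^2)"

definition Gn :: "nat \<Rightarrow> complex \<Rightarrow> complex \<Rightarrow> complex \<Rightarrow> complex \<Rightarrow> complex" where
  "Gn n w1 w2 b1 b2 =
     (\<Sum>x\<in>Wset n. \<Sum>y\<in>Bset n. Kinv n x y * w1 ^ nat (fst x) * w2 ^ nat (snd x)
                                  * b1 ^ nat (fst y) * b2 ^ nat (snd y))"

definition Hn :: "nat \<Rightarrow> nat \<Rightarrow> nat \<Rightarrow> complex \<Rightarrow> complex \<Rightarrow> complex \<Rightarrow> complex \<Rightarrow> complex" where
  "Hn n k l w1 w2 b1 b2 =
     (\<Sum>x1\<in>{x1::int. odd x1 \<and> 1 \<le> x1 \<and> x1 \<le> 2 * int n - 1}.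
      \<Sum>y2\<in>{y2::int. odd y2 \<and> 1 \<le> y2 \<and> y2 \<le> 2 * int n - 1}.
        Kinv n (x1, 2 * int n * int k) (2 * int n * int l, y2)
          * w1 ^ nat x1 * w2 ^ (2 * n * k) * b1 ^ (2 * n * l) * b2 ^ nat y2)"

end

theory Submission
  imports Defs "HOL-Computational_Algebra.Polynomial" "Jordan_Normal_Form.Determinant"
begin



lemma W_eq: "Wset n = (\<lambda>(a,j). (2*int a+1, 2*int j)) ` ({..<n} \<times> {..n})"
proof (rule Set.set_eqI)
  fix x :: "int \<times> int"
  obtain x1 x2 where x: "x = (x1,x2)" by fastforce
  show "x \<in> Wset n \<longleftrightarrow> x \<in> (\<lambda>(a,j). (2*int a+1, 2*int j)) ` ({..<n} \<times> {..n})"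
  proof
    assume "x \<in> Wset n"
    then have h: "odd x1" "even x2" "1 \<le> x1" "x1 \<le> 2*int n - 1" "0 \<le> x2" "x2 \<le> 2*int n"
      by (auto simp: Wset_def x)
    then obtain a where a: "x1 = 2*a+1" by (metis oddE)
    obtain j where j: "x2 = 2*j" using h by (metis evenE)
    have "(nat a, nat j) \<in> {..<n} \<times> {..n}" "x = (2*int (nat a)+1, 2*int (nat j))"
      using h a j x by auto
    then show "x \<in> (\<lambda>(a,j). (2*int a+1, 2*int j)) ` ({..<n} \<times> {..n})"
      by (metis (no_types, lifting) case_prod_conv image_eqI)
  next
    assume "x \<in> (\<lambda>(a,j). (2*int a+1, 2*int j)) ` ({..<n} \<times> {..n})"
    then show "x \<in> Wset n" by (auto simp: Wset_def)
  qed
qed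

lemma B_eq: "Bset n = (\<lambda>(c,j). (2*int c, 2*int j+1)) ` ({..n} \<times> {..<n})"
proof (rule Set.set_eqI)
  fix x :: "int \<times> int"
  obtain x1 x2 where x: "x = (x1,x2)" by fastforce
  show "x \<in> Bset n \<longleftrightarrow> x \<in> (\<lambda>(c,j). (2*int c, 2*int j+1)) ` ({..n} \<times> {..<n})"
  proof
    assume "x \<in> Bset n"
    then have h: "even x1" "odd x2" "0 \<le> x1" "x1 \<le> 2*int n" "1 \<le> x2" "x2 \<le> 2*int n - 1"
      by (auto simp: Bset_def x)
    then obtain a where a: "x2 = 2*a+1" by (metis oddE)
    obtain j where j: "x1 = 2*j" using h by (metis evenE)
    have "(nat j, nat a) \<in> {..n} \<times> {..<n}" "x = (2*int (nat j), 2*int (nat a)+1)"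
      using h a j x by auto
    then show "x \<in> (\<lambda>(c,j). (2*int c, 2*int j+1)) ` ({..n} \<times> {..<n})"
      by (metis (no_types, lifting) case_prod_conv image_eqI)
  next
    assume "x \<in> (\<lambda>(c,j). (2*int c, 2*int j+1)) ` ({..n} \<times> {..<n})"
    then show "x \<in> Bset n" by (auto simp: Bset_def)
  qed
qed

lemma finW[simp]: "finite (Wset n)" by (simp add: W_eq)
lemma finB[simp]: "finite (Bset n)" by (simp add: B_eq)

lemma injW: "inj_on (\<lambda>(a::nat,j::nat). (2*int a+1, 2*int j)) A"
  by (auto simp: inj_on_def)
lemma injB: "inj_on (\<lambda>(c::nat,j::nat). (2*int c, 2*int j+1)) A"
  by (auto simp: inj_on_def)

lemma sumW: "(\<Sum>x\<in>Wset n. f x) = (\<Sum>a<n. \<Sum>j\<le>n. f (2*int a+1, 2*int j))"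
  unfolding W_eq sum.reindex[OF injW] sum.cartesian_product by (simp add: split_def)
lemma sumB: "(\<Sum>y\<in>Bset n. f y) = (\<Sum>c\<le>n. \<Sum>j<n. f (2*int c, 2*int j+1))"
  unfolding B_eq sum.reindex[OF injB] sum.cartesian_product by (simp add: split_def)

lemma cardWB: "card (Wset n) = card (Bset n)"
proof -
  have "card (Wset n) = card ({..<n} \<times> {..n})" by (simp add: W_eq card_image[OF injW])
  moreover have "card (Bset n) = card ({..n} \<times> {..<n})" by (simp add: B_eq card_image[OF injB])
  ultimately show ?thesis by (simp add: card_cartesian_product)
qed

lemma Kast_expand:
  assumes "y \<in> Bset n" "x \<in> Wset n"
  shows "Kast n y x = of_bool (x = (fst y - 1, snd y - 1)) + of_bool (x = (fst y + 1, snd y + 1))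
     + \<i> * of_bool (x = (fst y - 1, snd y + 1)) + \<i> * of_bool (x = (fst y + 1, snd y - 1))"
  using assms by (cases x; cases y; auto simp: Kast_def Let_def)

lemma sum_delta_of_bool: "finite S \<Longrightarrow> (\<Sum>x\<in>S. of_bool (x = p) * (f x :: complex)) = (if p \<in> S then f p else 0)"
proof -
  assume "finite S"
  have "(\<Sum>x\<in>S. of_bool (x = p) * f x) = (\<Sum>x\<in>S. if x = p then f p else 0)" by (rule sum.cong) auto
  then show ?thesis using \<open>finite S\<close> by (simp add: sum.delta)
qed

lemma memW_cases:
  assumes y: "y \<in> Bset n"
  shows "((fst y - 1, snd y - 1) \<in> Wset n) = (fst y \<ge> 2)"
    "((fst y - 1, snd y + 1) \<in> Wset n) = (fst y \<ge> 2)"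
    "((fst y + 1, snd y + 1) \<in> Wset n) = (fst y \<le> 2 * int n - 2)"
    "((fst y + 1, snd y - 1) \<in> Wset n) = (fst y \<le> 2 * int n - 2)"
  using y by (cases y; auto simp: Wset_def Bset_def; presburger)+

lemma sumW_K:
  assumes y: "y \<in> Bset n"
  shows "(\<Sum>x\<in>Wset n. Kast n y x * f x) =
     (if fst y \<ge> 2 then f (fst y - 1, snd y - 1) + \<i> * f (fst y - 1, snd y + 1) else 0)
   + (if fst y \<le> 2 * int n - 2 then f (fst y + 1, snd y + 1) + \<i> * f (fst y + 1, snd y - 1) else 0)"
  (is "_ = ?R")
proof -
  let ?p1 = "(fst y - 1, snd y - 1)" and ?p2 = "(fst y + 1, snd y + 1)"
    and ?p3 = "(fst y - 1, snd y + 1)" and ?p4 = "(fst y + 1, snd y - 1)"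
  have eq: "\<And>x. x \<in> Wset n \<Longrightarrow> Kast n y x * f x = of_bool (x = ?p1) * f x + of_bool (x = ?p2) * f x
     + \<i> * (of_bool (x = ?p3) * f x) + \<i> * (of_bool (x = ?p4) * f x)"
    by (simp add: Kast_expand[OF y] algebra_simps)
  have "(\<Sum>x\<in>Wset n. Kast n y x * f x) =
     (\<Sum>x\<in>Wset n. of_bool (x = ?p1) * f x) + (\<Sum>x\<in>Wset n. of_bool (x = ?p2) * f x)
     + \<i> * (\<Sum>x\<in>Wset n. of_bool (x = ?p3) * f x) + \<i> * (\<Sum>x\<in>Wset n. of_bool (x = ?p4) * f x)"
    by (simp only: sum.cong[OF refl eq] sum.distrib sum_distrib_left)
  also have "\<dots> = (if ?p1 \<in> Wset n then f ?p1 else 0) + (if ?p2 \<in> Wset n then f ?p2 else 0)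
     + \<i> * (if ?p3 \<in> Wset n then f ?p3 else 0) + \<i> * (if ?p4 \<in> Wset n then f ?p4 else 0)"
    by (simp only: sum_delta_of_bool finW)
  also have "\<dots> = ?R" using memW_cases[OF y] by simp
  finally show ?thesis .
qed

lemma memB_cases:
  assumes x: "x \<in> Wset n"
  shows "((fst x - 1, snd x - 1) \<in> Bset n) = (snd x \<ge> 2)"
    "((fst x + 1, snd x - 1) \<in> Bset n) = (snd x \<ge> 2)"
    "((fst x + 1, snd x + 1) \<in> Bset n) = (snd x \<le> 2 * int n - 2)"
    "((fst x - 1, snd x + 1) \<in> Bset n) = (snd x \<le> 2 * int n - 2)"
  using x by (cases x; auto simp: Wset_def Bset_def; presburger)+

lemma sumB_K:
  assumes x: "x \<in> Wset n"
  shows "(\<Sum>y\<in>Bset n. f y * Kast n y x) =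
     (if snd x \<ge> 2 then f (fst x - 1, snd x - 1) + \<i> * f (fst x + 1, snd x - 1) else 0)
   + (if snd x \<le> 2 * int n - 2 then f (fst x + 1, snd x + 1) + \<i> * f (fst x - 1, snd x + 1) else 0)"
  (is "_ = ?R")
proof -
  let ?p1 = "(fst x + 1, snd x + 1)" and ?p2 = "(fst x - 1, snd x - 1)"
    and ?p3 = "(fst x + 1, snd x - 1)" and ?p4 = "(fst x - 1, snd x + 1)"
  have eq: "\<And>y. y \<in> Bset n \<Longrightarrow> f y * Kast n y x = of_bool (y = ?p1) * f y + of_bool (y = ?p2) * f y
     + \<i> * (of_bool (y = ?p3) * f y) + \<i> * (of_bool (y = ?p4) * f y)"
  proof -
    fix y assume y: "y \<in> Bset n"
    have a: "(x = (fst y - 1, snd y - 1)) = (y = ?p1)" "(x = (fst y + 1, snd y + 1)) = (y = ?p2)"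
      "(x = (fst y - 1, snd y + 1)) = (y = ?p3)" "(x = (fst y + 1, snd y - 1)) = (y = ?p4)"
      by (cases x; cases y; auto)+
    show "f y * Kast n y x = of_bool (y = ?p1) * f y + of_bool (y = ?p2) * f y
     + \<i> * (of_bool (y = ?p3) * f y) + \<i> * (of_bool (y = ?p4) * f y)"
      by (simp only: Kast_expand[OF y x] a) (simp add: algebra_simps)
  qed
  have "(\<Sum>y\<in>Bset n. f y * Kast n y x) =
     (\<Sum>y\<in>Bset n. of_bool (y = ?p1) * f y) + (\<Sum>y\<in>Bset n. of_bool (y = ?p2) * f y)
     + \<i> * (\<Sum>y\<in>Bset n. of_bool (y = ?p3) * f y) + \<i> * (\<Sum>y\<in>Bset n. of_bool (y = ?p4) * f y)"
    by (simp only: sum.cong[OF refl eq] sum.distrib sum_distrib_left)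
  also have "\<dots> = (if ?p1 \<in> Bset n then f ?p1 else 0) + (if ?p2 \<in> Bset n then f ?p2 else 0)
     + \<i> * (if ?p3 \<in> Bset n then f ?p3 else 0) + \<i> * (if ?p4 \<in> Bset n then f ?p4 else 0)"
    by (simp only: sum_delta_of_bool finB)
  also have "\<dots> = ?R" using memB_cases[OF x] by simp
  finally show ?thesis .
qed



lemma order_power_le: "q \<noteq> 0 \<Longrightarrow> order a (q ^ k) = k * order a q"
  by (induction k) (simp_all add: order_mult)

lemma inj_aux:
  fixes u :: "nat \<Rightarrow> nat \<Rightarrow> complex"
  assumes eq: "\<And>c j. c \<le> n \<Longrightarrow> j < n \<Longrightarrow>
     (if c \<ge> 1 then u (c-1) j + \<i> * u (c-1) (j+1) else 0) + (if c < n then u c (j+1) + \<i> * u c j else 0) = 0"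
  shows "\<forall>a<n. \<forall>j\<le>n. u a j = 0"
proof -
  define P where "P j = (\<Sum>a<n. monom (u a j) a)" for j
  have cP: "coeff (P j) c = (if c < n then u c j else 0)" for j c
    by (simp add: P_def coeff_sum coeff_monom)
  define \<alpha> :: "complex poly" where "\<alpha> = [:1, \<i>:]"
  define \<beta> :: "complex poly" where "\<beta> = [:\<i>, 1:]"
  have rec: "\<alpha> * P (j+1) = - (\<beta> * P j)" if j: "j < n" for j
  proof (rule poly_eqI)
    fix c
    show "coeff (\<alpha> * P (j+1)) c = coeff (- (\<beta> * P j)) c"
    proof (cases c)
      case 0
      then show ?thesis using eq[of 0 j] j by (simp add: \<alpha>_def \<beta>_def mult_pCons_left cP eq_neg_iff_add_eq_0)
    next
      case (Suc d)
      show ?thesis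
      proof (cases "c \<le> n")
        case True
        then show ?thesis using eq[of c j] j Suc
          by (simp add: \<alpha>_def \<beta>_def mult_pCons_left cP algebra_simps split: if_splits;
              metis add.commute add.left_commute add_eq_0_iff)
      next
        case False
        then show ?thesis using Suc by (simp add: \<alpha>_def \<beta>_def mult_pCons_left cP)
      qed
    qed
  qed
  have pow: "\<alpha>^j * P j = (-\<beta>)^j * P 0" if "j \<le> n" for j
    using that
  proof (induction j)
    case 0 then show ?case by simp
  next
    case (Suc j)
    have "\<alpha>^(Suc j) * P (Suc j) = \<alpha>^j * (\<alpha> * P (j+1))" by (simp add: algebra_simps)
    also have "\<dots> = (-\<beta>) * (\<alpha>^j * P j)" using rec[of j] Suc by (simp add: algebra_simps)
    also have "\<dots> = (-\<beta>)^(Suc j) * P 0" using Suc by simp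
    finally show ?case .
  qed
  have a0: "\<alpha> \<noteq> 0" and b0: "\<beta> \<noteq> 0" by (simp_all add: \<alpha>_def \<beta>_def)
  have P0: "P 0 = 0"
  proof (rule ccontr)
    assume nz: "P 0 \<noteq> 0"
    have rhs0: "(-\<beta>)^n * P 0 \<noteq> 0" using nz b0 by simp
    have "order \<i> ((-\<beta>)^n * P 0) = order \<i> (P 0)"
    proof -
      have "order \<i> (-\<beta>) = 0" by (rule order_0I) (simp add: \<beta>_def)
      then show ?thesis using rhs0 b0 by (simp add: order_mult order_power_le)
    qed
    moreover have "order \<i> (\<alpha>^n * P n) \<ge> n"
    proof -
      have ne: "\<alpha>^n * P n \<noteq> 0" using pow[of n] rhs0 by simp
      have "order \<i> \<alpha> \<noteq> 0" using order_root[of \<alpha> \<i>] a0 by (simp add: \<alpha>_def)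
      then have h: "n \<le> n * order \<i> \<alpha>" by simp
      have "order \<i> (\<alpha>^n * P n) = n * order \<i> \<alpha> + order \<i> (P n)"
        using ne a0 by (simp add: order_mult order_power_le)
      then show ?thesis using h by linarith
    qed
    ultimately have "n \<le> order \<i> (P 0)" using pow[of n] by simp
    also have "\<dots> \<le> degree (P 0)" by (rule order_degree[OF nz])
    also have "\<dots> \<le> n - 1" by (rule degree_le) (auto simp: cP)
    finally have "n = 0" by simp
    then show False using nz by (simp add: P_def)
  qed
  have "P j = 0" if "j \<le> n" for j
    using that
  proof (induction j)
    case 0 then show ?case using P0 by simp
  next
    case (Suc j)
    then have "\<alpha> * P (j+1) = 0" using rec[of j] by simp
    then show ?case using a0 by simp
  qed
  then show ?thesis using cP by (metis coeff_0)
qed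



lemma inv_exists:
  fixes K :: "'b \<Rightarrow> 'a \<Rightarrow> complex"
  assumes fW: "finite W" and fB: "finite B" and cWB: "card W = card B"
    and inj: "\<And>v. (\<forall>y\<in>B. (\<Sum>x\<in>W. K y x * v x) = 0) \<Longrightarrow> (\<forall>x\<in>W. v x = 0)"
  shows "\<exists>M. (\<forall>x\<in>W. \<forall>x'\<in>W. (\<Sum>y\<in>B. M x y * K y x') = (if x = x' then 1 else 0))
           \<and> (\<forall>y\<in>B. \<forall>y'\<in>B. (\<Sum>x\<in>W. K y x * M x y') = (if y = y' then 1 else 0))"
proof -
  define N where "N = card W"
  obtain fw where fw: "bij_betw fw W {0..<N}" using ex_bij_betw_finite_nat[OF fW] N_def by blast
  obtain fb where fb: "bij_betw fb B {0..<N}" using ex_bij_betw_finite_nat[OF fB] N_def cWB by metis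
  define gw where "gw = inv_into W fw"
  define gb where "gb = inv_into B fb"
  have gw: "bij_betw gw {0..<N} W" using fw by (simp add: gw_def bij_betw_inv_into)
  have gb: "bij_betw gb {0..<N} B" using fb by (simp add: gb_def bij_betw_inv_into)
  have gwfw: "\<And>x. x \<in> W \<Longrightarrow> gw (fw x) = x" using fw by (simp add: gw_def bij_betw_inv_into_left)
  have gbfb: "\<And>x. x \<in> B \<Longrightarrow> gb (fb x) = x" using fb by (simp add: gb_def bij_betw_inv_into_left)
  have fbgb: "\<And>j. j < N \<Longrightarrow> fb (gb j) = j" using fb by (auto simp: gb_def bij_betw_def intro: f_inv_into_f)
  have fwgw: "\<And>j. j < N \<Longrightarrow> fw (gw j) = j" using fw by (auto simp: gw_def bij_betw_def intro: f_inv_into_f)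
  define A where "A = mat N N (\<lambda>(i,j). K (gb i) (gw j))"
  have A: "A \<in> carrier_mat N N" by (simp add: A_def)
  have sumW: "\<And>g. (\<Sum>x\<in>W. g x) = (\<Sum>j<N. g (gw j))"
    using sum.reindex_bij_betw[OF gw] by (metis atLeast0LessThan)
  have sumB: "\<And>g. (\<Sum>x\<in>B. g x) = (\<Sum>j<N. g (gb j))"
    using sum.reindex_bij_betw[OF gb] by (metis atLeast0LessThan)
  have "det A \<noteq> 0"
  proof
    assume "det A = 0"
    then obtain v where v: "v \<in> carrier_vec N" "v \<noteq> 0\<^sub>v N" "A *\<^sub>v v = 0\<^sub>v N"
      using det_0_iff_vec_prod_zero[OF A] by blast
    define u where "u x = v $ fw x" for x
    have "\<forall>y\<in>B. (\<Sum>x\<in>W. K y x * u x) = 0"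
    proof
      fix y assume y: "y \<in> B"
      have fy: "fb y < N" using fb y by (auto simp: bij_betw_def)
      have "(\<Sum>x\<in>W. K y x * u x) = (\<Sum>j<N. K y (gw j) * v $ j)"
        unfolding sumW u_def
        by (rule sum.cong) (simp_all add: fwgw)
      also have "\<dots> = (A *\<^sub>v v) $ fb y"
        using fy v(1) by (simp add: A_def mult_mat_vec_def scalar_prod_def gbfb[OF y] atLeast0LessThan)
      also have "\<dots> = 0" using v(3) fy by simp
      finally show "(\<Sum>x\<in>W. K y x * u x) = 0" .
    qed
    then have "\<forall>x\<in>W. u x = 0" by (rule inj)
    then have "v = 0\<^sub>v N"
    proof -
      assume h: "\<forall>x\<in>W. u x = 0"
      show ?thesis
      proof (rule eq_vecI)
        fix i assume i: "i < dim_vec (0\<^sub>v N)"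
        then have "gw i \<in> W" "fw (gw i) = i" using gw fw i
          by (auto simp: bij_betw_def gw_def intro: f_inv_into_f)
        then show "v $ i = 0\<^sub>v N $ i" using h i unfolding u_def by (metis index_zero_vec(1) index_zero_vec(2))
      qed (use v in auto)
    qed
    then show False using v(2) by simp
  qed
  from det_non_zero_imp_unit[OF A this, unfolded Units_def, of "()"]
  obtain C where C: "C \<in> carrier_mat N N" and CA: "C * A = 1\<^sub>m N" and AC: "A * C = 1\<^sub>m N"
    by (auto simp: ring_mat_def)
  define M where "M x y = C $$ (fw x, fb y)" for x y
  have fwN: "\<And>x. x \<in> W \<Longrightarrow> fw x < N" using fw by (auto simp: bij_betw_def)
  have fbN: "\<And>x. x \<in> B \<Longrightarrow> fb x < N" using fb by (auto simp: bij_betw_def)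
  have fwinj: "\<And>x x'. x \<in> W \<Longrightarrow> x' \<in> W \<Longrightarrow> (fw x = fw x') = (x = x')"
    using fw by (auto simp: bij_betw_def inj_on_def)
  have fbinj: "\<And>x x'. x \<in> B \<Longrightarrow> x' \<in> B \<Longrightarrow> (fb x = fb x') = (x = x')"
    using fb by (auto simp: bij_betw_def inj_on_def)
  show ?thesis
  proof (intro exI[of _ M] conjI ballI)
    fix x x' assume x: "x \<in> W" and x': "x' \<in> W"
    have "(\<Sum>y\<in>B. M x y * K y x') = (\<Sum>j<N. C $$ (fw x, j) * A $$ (j, fw x'))"
      unfolding sumB M_def using fwN[OF x'] C by (auto simp: A_def fbgb gwfw[OF x'] intro!: sum.cong)
    also have "\<dots> = (C * A) $$ (fw x, fw x')"
      using fwN[OF x] fwN[OF x'] C by (simp add: A_def times_mat_def scalar_prod_def atLeast0LessThan)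
    also have "\<dots> = (if x = x' then 1 else 0)" using CA fwN[OF x] fwN[OF x'] fwinj[OF x x'] by simp
    finally show "(\<Sum>y\<in>B. M x y * K y x') = (if x = x' then 1 else 0)" .
  next
    fix y y' assume y: "y \<in> B" and y': "y' \<in> B"
    have "(\<Sum>x\<in>W. K y x * M x y') = (\<Sum>j<N. A $$ (fb y, j) * C $$ (j, fb y'))"
      unfolding sumW M_def using fbN[OF y] C by (auto simp: A_def fwgw gbfb[OF y] intro!: sum.cong)
    also have "\<dots> = (A * C) $$ (fb y, fb y')"
      using fbN[OF y] fbN[OF y'] C by (simp add: A_def times_mat_def scalar_prod_def atLeast0LessThan)
    also have "\<dots> = (if y = y' then 1 else 0)" using AC fbN[OF y] fbN[OF y'] fbinj[OF y y'] by simp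
    finally show "(\<Sum>x\<in>W. K y x * M x y') = (if y = y' then 1 else 0)" .
  qed
qed




lemma K_inj:
  assumes h: "\<forall>y\<in>Bset n. (\<Sum>x\<in>Wset n. Kast n y x * v x) = 0"
  shows "\<forall>x\<in>Wset n. v x = 0"
proof -
  define u where "u a j = v (2 * int a + 1, 2 * int j)" for a j
  have eq: "(if c \<ge> 1 then u (c-1) j + \<i> * u (c-1) (j+1) else 0) + (if c < n then u c (j+1) + \<i> * u c j else 0) = 0"
    if c: "c \<le> n" and j: "j < n" for c j
  proof -
    have y: "(2 * int c, 2 * int j + 1) \<in> Bset n" using c j by (auto simp: Bset_def)
    have "(if c \<ge> 1 then u (c-1) j + \<i> * u (c-1) (j+1) else 0) + (if c < n then u c (j+1) + \<i> * u c j else 0)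
      = (\<Sum>x\<in>Wset n. Kast n (2 * int c, 2 * int j + 1) x * v x)"
    proof (cases c)
      case 0
      then show ?thesis using j by (subst sumW_K[OF y]) (simp add: u_def add.commute)
    next
      case (Suc c')
      have a: "2 * int c - 1 = 2 * int c' + 1" "2 * int c + 1 = 2 * int (Suc c') + 1" using Suc by auto
      show ?thesis using Suc c by (subst sumW_K[OF y]) (simp add: u_def a algebra_simps)
    qed
    then show ?thesis using h y by simp
  qed
  have "\<forall>a<n. \<forall>j\<le>n. u a j = 0" by (rule inj_aux) (use eq in auto)
  then show ?thesis by (auto simp: W_eq u_def)
qed



lemma sum_delta_if1: "finite S \<Longrightarrow> (\<Sum>x\<in>S. (if p = x then 1 else 0) * (f x :: complex)) = (if p \<in> S then f p else 0)"
proof -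
  assume "finite S"
  have "(\<Sum>x\<in>S. (if p = x then 1 else 0) * f x) = (\<Sum>x\<in>S. if x = p then f x else 0)" by (rule sum.cong) auto
  then show ?thesis using \<open>finite S\<close> by (simp add: sum.delta)
qed

lemma sum_delta_if2: "finite S \<Longrightarrow> (\<Sum>x\<in>S. (f x :: complex) * (if x = p then 1 else 0)) = (if p \<in> S then f p else 0)"
proof -
  assume "finite S"
  have "(\<Sum>x\<in>S. f x * (if x = p then 1 else 0)) = (\<Sum>x\<in>S. if x = p then f x else 0)" by (rule sum.cong) auto
  then show ?thesis using \<open>finite S\<close> by (simp add: sum.delta)
qed

lemma Kinv_exists: "\<exists>M. is_Kinv n M"
proof -
  obtain M0 where M0: "\<forall>x\<in>Wset n. \<forall>x'\<in>Wset n. (\<Sum>y\<in>Bset n. M0 x y * Kast n y x') = (if x = x' then 1 else 0)"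
     "\<forall>y\<in>Bset n. \<forall>y'\<in>Bset n. (\<Sum>x\<in>Wset n. Kast n y x * M0 x y') = (if y = y' then 1 else 0)"
    using inv_exists[where K="Kast n", OF finW finB cardWB K_inj] by blast
  define M where "M x y = (if x \<in> Wset n \<and> y \<in> Bset n then M0 x y else 0)" for x y
  have "is_Kinv n M"
    unfolding is_Kinv_def
  proof (intro conjI ballI allI impI)
    fix x y assume "x \<notin> Wset n \<or> y \<notin> Bset n" then show "M x y = 0" by (auto simp: M_def)
  next
    fix x x' assume x: "x \<in> Wset n" and x': "x' \<in> Wset n"
    have "(\<Sum>y\<in>Bset n. M x y * Kast n y x') = (\<Sum>y\<in>Bset n. M0 x y * Kast n y x')"
      using x by (auto simp: M_def intro!: sum.cong)
    then show "(\<Sum>y\<in>Bset n. M x y * Kast n y x') = (if x = x' then 1 else 0)" using M0(1) x x' by simp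
  next
    fix y y' assume y: "y \<in> Bset n" and y': "y' \<in> Bset n"
    have "(\<Sum>x\<in>Wset n. Kast n y x * M x y') = (\<Sum>x\<in>Wset n. Kast n y x * M0 x y')"
      using y' by (auto simp: M_def intro!: sum.cong)
    then show "(\<Sum>x\<in>Wset n. Kast n y x * M x y') = (if y = y' then 1 else 0)" using M0(2) y y' by simp
  qed
  then show ?thesis by blast
qed

lemma Kinv_unique: assumes "is_Kinv n M1" "is_Kinv n M2" shows "M1 = M2"
proof (intro ext)
  fix x y
  show "M1 x y = M2 x y"
  proof (cases "x \<in> Wset n \<and> y \<in> Bset n")
    case False
    have "M1 x y = 0" using assms(1) False unfolding is_Kinv_def by blast
    moreover have "M2 x y = 0" using assms(2) False unfolding is_Kinv_def by blast
    ultimately show ?thesis by simp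
  next
    case True
    then have x: "x \<in> Wset n" and y: "y \<in> Bset n" by auto
    have A2: "\<And>x'. x' \<in> Wset n \<Longrightarrow> (\<Sum>y'\<in>Bset n. M2 x y' * Kast n y' x') = (if x = x' then 1 else 0)"
      using assms(2) x unfolding is_Kinv_def by blast
    have A1: "\<And>y'. y' \<in> Bset n \<Longrightarrow> (\<Sum>x'\<in>Wset n. Kast n y' x' * M1 x' y) = (if y' = y then 1 else 0)"
      using assms(1) y unfolding is_Kinv_def by blast
    have "M1 x y = (\<Sum>x'\<in>Wset n. (if x = x' then 1 else 0) * M1 x' y)"
      using x by (simp add: sum_delta_if1)
    also have "\<dots> = (\<Sum>x'\<in>Wset n. (\<Sum>y'\<in>Bset n. M2 x y' * Kast n y' x') * M1 x' y)"
      by (rule sum.cong) (simp_all add: A2)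
    also have "\<dots> = (\<Sum>x'\<in>Wset n. \<Sum>y'\<in>Bset n. M2 x y' * (Kast n y' x' * M1 x' y))"
      by (simp add: sum_distrib_right mult.assoc)
    also have "\<dots> = (\<Sum>y'\<in>Bset n. M2 x y' * (\<Sum>x'\<in>Wset n. Kast n y' x' * M1 x' y))"
      by (subst sum.swap) (simp add: sum_distrib_left)
    also have "\<dots> = (\<Sum>y'\<in>Bset n. M2 x y' * (if y' = y then 1 else 0))"
      by (rule sum.cong) (simp_all add: A1)
    also have "\<dots> = M2 x y" using y by (simp add: sum_delta_if2)
    finally show ?thesis .
  qed
qed

lemma Kinv_ex1: "\<exists>!M. is_Kinv n M"
proof -
  obtain M where M: "is_Kinv n M" using Kinv_exists by blast
  show ?thesis
  proof (rule ex1I[of _ M])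
    show "is_Kinv n M" by (rule M)
  next
    fix M' assume "is_Kinv n M'" then show "M' = M" using M by (rule Kinv_unique)
  qed
qed

lemma Kinv_is: "is_Kinv n (Kinv n)"
  unfolding Kinv_def by (rule theI'[OF Kinv_ex1])



definition pw :: "complex \<Rightarrow> complex \<Rightarrow> int \<times> int \<Rightarrow> complex" where
  "pw a b x = a ^ nat (fst x) * b ^ nat (snd x)"

lemma B_elem: "y \<in> Bset n \<Longrightarrow> \<exists>c j. y = (2 * int c, 2 * int j + 1) \<and> c \<le> n \<and> j < n"
  by (auto simp: B_eq)
lemma W_elem: "x \<in> Wset n \<Longrightarrow> \<exists>a j. x = (2 * int a + 1, 2 * int j) \<and> a < n \<and> j \<le> n"
  by (auto simp: W_eq)

lemma Sb_formula:
  assumes y: "y \<in> Bset n"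
  shows "b1 * b2 * (\<Sum>x\<in>Wset n. Kast n y x * pw b1 b2 x) = pw b1 b2 y *
     ((if fst y \<ge> 2 then 1 + \<i> * b2^2 else 0) + (if fst y \<le> 2 * int n - 2 then b1^2 * b2^2 + \<i> * b1^2 else 0))"
proof -
  obtain c j where cj: "y = (2 * int c, 2 * int j + 1)" "c \<le> n" "j < n" using B_elem[OF y] by blast
  show ?thesis
  proof (cases c)
    case 0
    have e: "nat (2 * int j + 1 + 1) = Suc (Suc (2 * j))" "nat (2 * int j + 1 - 1) = 2 * j" "nat (2 * int j + 1) = Suc (2 * j)" by auto
    show ?thesis apply (subst sumW_K[OF y]) unfolding cj(1) fst_conv snd_conv pw_def e using cj 0
      by (simp add: algebra_simps power2_eq_square)
  next
    case (Suc c')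
    have e: "nat (2 * int j + 1 + 1) = Suc (Suc (2 * j))" "nat (2 * int j + 1 - 1) = 2 * j" "nat (2 * int j + 1) = Suc (2 * j)"
      "nat (2 * int c - 1) = Suc (2 * c')" "nat (2 * int c + 1) = Suc (Suc (Suc (2 * c')))" "nat (2 * int c) = Suc (Suc (2 * c'))"
      using Suc by auto
    show ?thesis apply (subst sumW_K[OF y]) unfolding cj(1) fst_conv snd_conv pw_def e using cj Suc
      by (simp add: algebra_simps power2_eq_square)
  qed
qed


lemma pw_s1: "a \<ge> 1 \<Longrightarrow> b \<ge> 1 \<Longrightarrow> w1 * w2 * pw w1 w2 (a - 1, b - 1) = pw w1 w2 (a, b)"
proof -
  assume "a \<ge> 1" "b \<ge> 1"
  then have "nat a = Suc (nat (a - 1))" "nat b = Suc (nat (b - 1))" by auto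
  then show ?thesis by (simp add: pw_def)
qed
lemma pw_s2: "a \<ge> 0 \<Longrightarrow> b \<ge> 1 \<Longrightarrow> w1 * w2 * pw w1 w2 (a + 1, b - 1) = w1^2 * pw w1 w2 (a, b)"
proof -
  assume "a \<ge> 0" "b \<ge> 1"
  then have "nat (a + 1) = Suc (nat a)" "nat b = Suc (nat (b - 1))" by auto
  then show ?thesis by (simp add: pw_def power2_eq_square)
qed
lemma pw_s3: "a \<ge> 0 \<Longrightarrow> b \<ge> 0 \<Longrightarrow> w1 * w2 * pw w1 w2 (a + 1, b + 1) = w1^2 * w2^2 * pw w1 w2 (a, b)"
proof -
  assume "a \<ge> 0" "b \<ge> 0"
  then have "nat (a + 1) = Suc (nat a)" "nat (b + 1) = Suc (nat b)" by auto
  then show ?thesis by (simp add: pw_def power2_eq_square)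
qed
lemma pw_s4: "a \<ge> 1 \<Longrightarrow> b \<ge> 0 \<Longrightarrow> w1 * w2 * pw w1 w2 (a - 1, b + 1) = w2^2 * pw w1 w2 (a, b)"
proof -
  assume "a \<ge> 1" "b \<ge> 0"
  then have "nat a = Suc (nat (a - 1))" "nat (b + 1) = Suc (nat b)" by auto
  then show ?thesis by (simp add: pw_def power2_eq_square)
qed

lemma Sw_formula:
  assumes x: "x \<in> Wset n"
  shows "w1 * w2 * (\<Sum>y\<in>Bset n. pw w1 w2 y * Kast n y x) = pw w1 w2 x *
     ((if snd x \<ge> 2 then 1 + \<i> * w1^2 else 0) + (if snd x \<le> 2 * int n - 2 then w1^2 * w2^2 + \<i> * w2^2 else 0))"
proof -
  obtain x1 x2 where xx: "x = (x1, x2)" by fastforce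
  have r: "x1 \<ge> 1" "x2 \<ge> 0" using x xx by (auto simp: Wset_def)
  let ?p = "pw w1 w2"
  have "w1 * w2 * (\<Sum>y\<in>Bset n. pw w1 w2 y * Kast n y x) =
     (if x2 \<ge> 2 then w1 * w2 * ?p (x1 - 1, x2 - 1) + \<i> * (w1 * w2 * ?p (x1 + 1, x2 - 1)) else 0)
   + (if x2 \<le> 2 * int n - 2 then w1 * w2 * ?p (x1 + 1, x2 + 1) + \<i> * (w1 * w2 * ?p (x1 - 1, x2 + 1)) else 0)"
    by (subst sumB_K[OF x]) (simp add: xx distrib_left mult_ac)
  also have "\<dots> = ?p x * ((if snd x \<ge> 2 then 1 + \<i> * w1^2 else 0) + (if snd x \<le> 2 * int n - 2 then w1^2 * w2^2 + \<i> * w2^2 else 0))"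
  proof -
    have a3: "w1 * w2 * ?p (x1 + 1, x2 + 1) = w1^2 * w2^2 * ?p (x1, x2)" using r by (intro pw_s3) auto
    have a4: "w1 * w2 * ?p (x1 - 1, x2 + 1) = w2^2 * ?p (x1, x2)" using r by (intro pw_s4) auto
    show ?thesis
    proof (cases "x2 \<ge> 2")
      case True
      have a1: "w1 * w2 * ?p (x1 - 1, x2 - 1) = ?p (x1, x2)" using r True by (intro pw_s1) auto
      have a2: "w1 * w2 * ?p (x1 + 1, x2 - 1) = w1^2 * ?p (x1, x2)" using r True by (intro pw_s2) auto
      show ?thesis unfolding a1 a2 a3 a4 xx using True by (simp add: algebra_simps)
    next
      case False
      show ?thesis unfolding a3 a4 xx using False by (simp add: algebra_simps)
    qed
  qed
  finally show ?thesis .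
qed



lemma sideB:
  assumes M: "is_Kinv n M"
  shows "(\<Sum>x\<in>Wset n. \<Sum>y\<in>Bset n. h x * M x y * (\<Sum>x'\<in>Wset n. Kast n y x' * pw b1 b2 x'))
       = (\<Sum>x\<in>Wset n. h x * pw b1 b2 x)"
proof (rule sum.cong[OF refl])
  fix x assume x: "x \<in> Wset n"
  have A: "\<And>x'. x' \<in> Wset n \<Longrightarrow> (\<Sum>y\<in>Bset n. M x y * Kast n y x') = (if x = x' then 1 else 0)"
    using M x unfolding is_Kinv_def by blast
  have "(\<Sum>y\<in>Bset n. h x * M x y * (\<Sum>x'\<in>Wset n. Kast n y x' * pw b1 b2 x'))
      = (\<Sum>y\<in>Bset n. \<Sum>x'\<in>Wset n. h x * (M x y * Kast n y x' * pw b1 b2 x'))"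
  proof (rule sum.cong[OF refl])
    fix y
    show "h x * M x y * (\<Sum>x'\<in>Wset n. Kast n y x' * pw b1 b2 x') = (\<Sum>x'\<in>Wset n. h x * (M x y * Kast n y x' * pw b1 b2 x'))"
      by (subst sum_distrib_left) (simp only: mult.assoc)
  qed
  also have "\<dots> = (\<Sum>x'\<in>Wset n. \<Sum>y\<in>Bset n. h x * (M x y * Kast n y x' * pw b1 b2 x'))"
    by (rule sum.swap)
  also have "\<dots> = (\<Sum>x'\<in>Wset n. h x * ((\<Sum>y\<in>Bset n. M x y * Kast n y x') * pw b1 b2 x'))"
    by (simp only: sum_distrib_left[symmetric] sum_distrib_right[symmetric])
  also have "\<dots> = (\<Sum>x'\<in>Wset n. h x * ((if x = x' then 1 else 0) * pw b1 b2 x'))"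
    by (rule sum.cong) (simp_all add: A)
  also have "\<dots> = h x * (\<Sum>x'\<in>Wset n. (if x = x' then 1 else 0) * pw b1 b2 x')"
    by (simp only: sum_distrib_left)
  also have "\<dots> = h x * pw b1 b2 x" using x by (simp add: sum_delta_if1)
  finally show "(\<Sum>y\<in>Bset n. h x * M x y * (\<Sum>x'\<in>Wset n. Kast n y x' * pw b1 b2 x')) = h x * pw b1 b2 x" .
qed

lemma sideA:
  assumes M: "is_Kinv n M"
  shows "(\<Sum>x\<in>Wset n. \<Sum>y\<in>Bset n. (\<Sum>y'\<in>Bset n. pw w1 w2 y' * Kast n y' x) * M x y * g y)
       = (\<Sum>y\<in>Bset n. pw w1 w2 y * g y)"
proof -
  have "(\<Sum>x\<in>Wset n. \<Sum>y\<in>Bset n. (\<Sum>y'\<in>Bset n. pw w1 w2 y' * Kast n y' x) * M x y * g y)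
      = (\<Sum>y\<in>Bset n. \<Sum>x\<in>Wset n. (\<Sum>y'\<in>Bset n. pw w1 w2 y' * Kast n y' x) * M x y * g y)"
    by (rule sum.swap)
  also have "\<dots> = (\<Sum>y\<in>Bset n. pw w1 w2 y * g y)"
  proof (rule sum.cong[OF refl])
    fix y assume y: "y \<in> Bset n"
    have A: "\<And>y'. y' \<in> Bset n \<Longrightarrow> (\<Sum>x\<in>Wset n. Kast n y' x * M x y) = (if y' = y then 1 else 0)"
      using M y unfolding is_Kinv_def by blast
    have "(\<Sum>x\<in>Wset n. (\<Sum>y'\<in>Bset n. pw w1 w2 y' * Kast n y' x) * M x y * g y)
        = (\<Sum>x\<in>Wset n. \<Sum>y'\<in>Bset n. (pw w1 w2 y' * g y) * (Kast n y' x * M x y))"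
    proof (rule sum.cong[OF refl])
      fix x
      have "(\<Sum>y'\<in>Bset n. pw w1 w2 y' * Kast n y' x) * M x y * g y = (\<Sum>y'\<in>Bset n. pw w1 w2 y' * Kast n y' x) * (M x y * g y)"
        by (simp only: mult.assoc)
      also have "\<dots> = (\<Sum>y'\<in>Bset n. pw w1 w2 y' * Kast n y' x * (M x y * g y))"
        by (rule sum_distrib_right)
      also have "\<dots> = (\<Sum>y'\<in>Bset n. (pw w1 w2 y' * g y) * (Kast n y' x * M x y))"
        by (rule sum.cong) (simp_all add: mult_ac)
      finally show "(\<Sum>y'\<in>Bset n. pw w1 w2 y' * Kast n y' x) * M x y * g y = (\<Sum>y'\<in>Bset n. (pw w1 w2 y' * g y) * (Kast n y' x * M x y))" .
    qed
    also have "\<dots> = (\<Sum>y'\<in>Bset n. \<Sum>x\<in>Wset n. (pw w1 w2 y' * g y) * (Kast n y' x * M x y))"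
      by (rule sum.swap)
    also have "\<dots> = (\<Sum>y'\<in>Bset n. (pw w1 w2 y' * g y) * (\<Sum>x\<in>Wset n. Kast n y' x * M x y))"
      by (simp only: sum_distrib_left)
    also have "\<dots> = (\<Sum>y'\<in>Bset n. (pw w1 w2 y' * g y) * (if y' = y then 1 else 0))"
      by (rule sum.cong) (simp_all add: A)
    also have "\<dots> = pw w1 w2 y * g y" using y by (simp add: sum_delta_if2)
    finally show "(\<Sum>x\<in>Wset n. (\<Sum>y'\<in>Bset n. pw w1 w2 y' * Kast n y' x) * M x y * g y) = pw w1 w2 y * g y" .
  qed
  finally show ?thesis .
qed



lemma sumW_row:
  assumes "m \<le> n"
  shows "(\<Sum>x\<in>Wset n. of_bool (snd x = 2 * int m) * (F x :: complex)) = (\<Sum>a<n. F (2 * int a + 1, 2 * int m))"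
proof -
  have "(\<Sum>x\<in>Wset n. of_bool (snd x = 2 * int m) * F x)
      = (\<Sum>a<n. \<Sum>j\<le>n. of_bool (j = m) * F (2 * int a + 1, 2 * int j))"
    unfolding sumW by simp
  also have "\<dots> = (\<Sum>a<n. F (2 * int a + 1, 2 * int m))"
    by (rule sum.cong[OF refl]) (subst sum_delta_of_bool, use assms in auto)
  finally show ?thesis .
qed

lemma sumB_col:
  assumes "m \<le> n"
  shows "(\<Sum>y\<in>Bset n. of_bool (fst y = 2 * int m) * (F y :: complex)) = (\<Sum>d<n. F (2 * int m, 2 * int d + 1))"
proof -
  have "(\<Sum>y\<in>Bset n. of_bool (fst y = 2 * int m) * F y)
      = (\<Sum>c\<le>n. of_bool (c = m) * (\<Sum>d<n. F (2 * int c, 2 * int d + 1)))"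
    unfolding sumB fst_conv by (rule sum.cong[OF refl]) (simp add: sum_distrib_left)
  also have "\<dots> = (\<Sum>d<n. F (2 * int m, 2 * int d + 1))"
    by (subst sum_delta_of_bool) (use assms in auto)
  finally show ?thesis .
qed

lemma odd_set: "{x1::int. odd x1 \<and> 1 \<le> x1 \<and> x1 \<le> 2 * int n - 1} = (\<lambda>a. 2 * int a + 1) ` {..<n}"
proof (rule Set.set_eqI)
  fix x :: int
  show "x \<in> {x1::int. odd x1 \<and> 1 \<le> x1 \<and> x1 \<le> 2 * int n - 1} \<longleftrightarrow> x \<in> (\<lambda>a. 2 * int a + 1) ` {..<n}"
  proof
    assume "x \<in> {x1::int. odd x1 \<and> 1 \<le> x1 \<and> x1 \<le> 2 * int n - 1}"
    then have h: "odd x" "1 \<le> x" "x \<le> 2 * int n - 1" by auto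
    then obtain a where a: "x = 2 * a + 1" by (metis oddE)
    then have "nat a < n" "x = 2 * int (nat a) + 1" using h by auto
    then show "x \<in> (\<lambda>a. 2 * int a + 1) ` {..<n}" by (intro image_eqI[of _ _ "nat a"]) auto
  qed auto
qed

lemma sum_odd: "(\<Sum>x1\<in>{x1::int. odd x1 \<and> 1 \<le> x1 \<and> x1 \<le> 2 * int n - 1}. f x1) = (\<Sum>a<n. f (2 * int a + 1))"
  unfolding odd_set by (subst sum.reindex) (auto simp: inj_on_def)

lemma Hn_eq:
  assumes k: "n * k \<le> n" and l: "n * l \<le> n"
  shows "Hn n k l w1 w2 b1 b2 = (\<Sum>x\<in>Wset n. \<Sum>y\<in>Bset n.
      (of_bool (snd x = 2 * int (n * k)) * pw w1 w2 x) * Kinv n x y * (of_bool (fst y = 2 * int (n * l)) * pw b1 b2 y))"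
proof -
  have "(\<Sum>x\<in>Wset n. \<Sum>y\<in>Bset n.
      (of_bool (snd x = 2 * int (n * k)) * pw w1 w2 x) * Kinv n x y * (of_bool (fst y = 2 * int (n * l)) * pw b1 b2 y))
    = (\<Sum>x\<in>Wset n. of_bool (snd x = 2 * int (n * k)) *
        (\<Sum>y\<in>Bset n. of_bool (fst y = 2 * int (n * l)) * (pw w1 w2 x * Kinv n x y * pw b1 b2 y)))"
    by (rule sum.cong[OF refl]) (simp add: sum_distrib_left mult_ac)
  also have "\<dots> = (\<Sum>a<n. \<Sum>d<n. pw w1 w2 (2 * int a + 1, 2 * int (n * k)) * Kinv n (2 * int a + 1, 2 * int (n * k)) (2 * int (n * l), 2 * int d + 1)
        * pw b1 b2 (2 * int (n * l), 2 * int d + 1))"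
    by (simp only: sumW_row[OF k] sumB_col[OF l])
  also have "\<dots> = Hn n k l w1 w2 b1 b2"
  proof -
    have e: "2 * int (n * k) = 2 * int n * int k" "2 * int (n * l) = 2 * int n * int l"
      "nat (2 * int (n * k)) = 2 * n * k" "nat (2 * int (n * l)) = 2 * n * l" by (simp_all add: nat_mult_distrib)
    show ?thesis unfolding Hn_def sum_odd pw_def fst_conv snd_conv e(3) e(4) e(1) e(2)
      by (rule sum.cong[OF refl], rule sum.cong[OF refl]) (simp add: mult_ac nat_mult_distrib)
  qed
  finally show ?thesis by simp
qed

lemma fpoly_Suc: "fpoly (Suc n) t = fpoly n t + t ^ n"
  by (simp add: fpoly_def)

lemma fpoly_mul: "(1 - t) * fpoly n t = 1 - t ^ n"
proof (induction n)
  case 0 then show ?case by (simp add: fpoly_def)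
next
  case (Suc n)
  have "(1 - t) * fpoly (Suc n) t = (1 - t) * fpoly n t + (1 - t) * t ^ n" by (simp only: fpoly_Suc distrib_left)
  also have "\<dots> = 1 - t ^ n + (1 - t) * t ^ n" by (simp only: Suc.IH)
  also have "\<dots> = 1 - t ^ Suc n" by (simp add: algebra_simps)
  finally show ?case .
qed

lemma PS1: "(\<Sum>x\<in>Wset n. pw w1 w2 x * pw b1 b2 x) = w1 * b1 * fpoly n (w1^2 * b1^2) * fpoly (n+1) (w2^2 * b2^2)"
proof -
  have e: "nat (2 * int a + 1) = 2 * a + 1" "nat (2 * int j) = 2 * j" for a j by auto
  have "(\<Sum>x\<in>Wset n. pw w1 w2 x * pw b1 b2 x) = (\<Sum>a<n. \<Sum>j\<le>n. (w1 * b1 * (w1^2*b1^2)^a) * ((w2^2*b2^2)^j))"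
    unfolding sumW pw_def fst_conv snd_conv e
    by (rule sum.cong[OF refl], rule sum.cong[OF refl]) (simp add: power_mult_distrib power_add power_mult power2_eq_square mult_ac)
  also have "\<dots> = (\<Sum>a<n. w1 * b1 * (w1^2*b1^2)^a) * (\<Sum>j\<le>n. (w2^2*b2^2)^j)"
    by (simp add: sum_product)
  also have "\<dots> = w1 * b1 * fpoly n (w1^2 * b1^2) * fpoly (n+1) (w2^2 * b2^2)"
    by (simp add: fpoly_def sum_distrib_left lessThan_Suc_atMost)
  finally show ?thesis .
qed

lemma PS2: "m \<le> n \<Longrightarrow> (\<Sum>y\<in>Bset n. of_bool (fst y = 2 * int m) * (pw w1 w2 y * pw b1 b2 y))
   = (w1^2 * b1^2)^m * (w2 * b2 * fpoly n (w2^2 * b2^2))"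
proof -
  assume m: "m \<le> n"
  have e: "nat (2 * int d + 1) = 2 * d + 1" "nat (2 * int m) = 2 * m" for d by auto
  have "(\<Sum>y\<in>Bset n. of_bool (fst y = 2 * int m) * (pw w1 w2 y * pw b1 b2 y))
     = (\<Sum>d<n. (w1^2 * b1^2)^m * (w2 * b2 * (w2^2*b2^2)^d))"
    unfolding sumB_col[OF m] pw_def fst_conv snd_conv e
    by (rule sum.cong[OF refl]) (simp add: power_mult_distrib power_add power_mult power2_eq_square mult_ac)
  also have "\<dots> = (w1^2 * b1^2)^m * (w2 * b2 * fpoly n (w2^2 * b2^2))"
    by (simp add: fpoly_def sum_distrib_left)
  finally show ?thesis .
qed



lemma final_combine:
  fixes w1 w2 b1 b2 F U T V G L0 L2 H00 H01 H10 H11 Cw Cb :: complex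
  assumes Cw: "Cw = 1 + w1^2 * w2^2 + \<i> * (w1^2 + w2^2)" and Cb: "Cb = 1 + b1^2 * b2^2 + \<i> * (b1^2 + b2^2)"
    and Cw0: "Cw \<noteq> 0" and Cb0: "Cb \<noteq> 0"
    and T: "T = 1 - (1 - w1^2*b1^2) * F" and V: "V = 1 - (1 - w2^2*b2^2) * U"
    and E1: "Cb * G - (1 + \<i> * b2^2) * L0 - (b1^2 * b2^2 + \<i> * b1^2) * L2 = b1 * b2 * (w1 * b1 * F * (U + V))"
    and E2: "Cw * L0 - (1 + \<i> * w1^2) * H00 - (w1^2 * w2^2 + \<i> * w2^2) * H10 = w1 * w2 * (w2 * b2 * U)"
    and E3: "Cw * L2 - (1 + \<i> * w1^2) * H01 - (w1^2 * w2^2 + \<i> * w2^2) * H11 = w1 * w2 * (T * (w2 * b2 * U))"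
  shows "G = w1 * w2^2 * b2 * (F + T) * U / Cw
    + (1 + \<i> * w1^2) * ((1 + \<i> * b2^2) * H00 + b1^2 * (b2 * w1 * F + (\<i> + b2^2) * H01)) / (Cw * Cb)
    + (\<i> + w1^2) * w2^2 * (b1^2 * (b2 * V) * w1 * F + (1 + \<i> * b2^2) * H10 + b1^2 * (\<i> + b2^2) * H11) / (Cw * Cb)"
    (is "G = ?X / Cw + ?Y / (Cw * Cb) + ?Z / (Cw * Cb)")
proof -
  let ?Ab = "1 + \<i> * b2^2" and ?Bb = "b1^2 * b2^2 + \<i> * b1^2"
  let ?Aw = "1 + \<i> * w1^2" and ?Bw = "w1^2 * w2^2 + \<i> * w2^2"
  have e1: "Cb * G = b1 * b2 * (w1 * b1 * F * (U + V)) + ?Ab * L0 + ?Bb * L2"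
  proof -
    have "Cb * G = (Cb * G - ?Ab * L0 - ?Bb * L2) + ?Ab * L0 + ?Bb * L2" by simp
    then show ?thesis unfolding E1 .
  qed
  have e2: "Cw * L0 = w1 * w2 * (w2 * b2 * U) + ?Aw * H00 + ?Bw * H10"
  proof -
    have "Cw * L0 = (Cw * L0 - ?Aw * H00 - ?Bw * H10) + ?Aw * H00 + ?Bw * H10" by simp
    then show ?thesis unfolding E2 .
  qed
  have e3: "Cw * L2 = w1 * w2 * (T * (w2 * b2 * U)) + ?Aw * H01 + ?Bw * H11"
  proof -
    have "Cw * L2 = (Cw * L2 - ?Aw * H01 - ?Bw * H11) + ?Aw * H01 + ?Bw * H11" by simp
    then show ?thesis unfolding E3 .
  qed
  have "Cw * Cb * G = Cw * (b1 * b2 * (w1 * b1 * F * (U + V))) + ?Ab * (Cw * L0) + ?Bb * (Cw * L2)"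
    by (simp only: mult.assoc e1) (simp only: distrib_left mult.left_commute)
  also have "\<dots> = Cw * (b1 * b2 * (w1 * b1 * F * (U + V))) + ?Ab * (w1 * w2 * (w2 * b2 * U) + ?Aw * H00 + ?Bw * H10)
      + ?Bb * (w1 * w2 * (T * (w2 * b2 * U)) + ?Aw * H01 + ?Bw * H11)"
    by (simp only: e2 e3)
  also have "\<dots> = ?X * Cb + ?Y + ?Z"
    unfolding Cw Cb T V by (simp add: algebra_simps power2_eq_square)
  also have "\<dots> = Cw * Cb * (?X / Cw + ?Y / (Cw * Cb) + ?Z / (Cw * Cb))"
    using Cw0 Cb0 by (simp add: field_simps)
  finally show ?thesis using Cw0 Cb0 by simp
qed

lemma lin_B:
  fixes f :: "'a \<Rightarrow> 'b \<Rightarrow> complex"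
  shows "(\<Sum>x\<in>X. \<Sum>y\<in>Y. f x y * (g y * (C - o1 y * A - o2 y * B)))
   = C * (\<Sum>x\<in>X. \<Sum>y\<in>Y. f x y * g y) - A * (\<Sum>x\<in>X. \<Sum>y\<in>Y. f x y * (o1 y * g y))
     - B * (\<Sum>x\<in>X. \<Sum>y\<in>Y. f x y * (o2 y * g y))"
proof -
  have "\<And>x y. f x y * (g y * (C - o1 y * A - o2 y * B)) = C * (f x y * g y) - A * (f x y * (o1 y * g y)) - B * (f x y * (o2 y * g y))"
    by (simp add: algebra_simps)
  then show ?thesis by (simp add: sum_subtractf sum_distrib_left)
qed

lemma lin_A:
  fixes h :: "'a \<Rightarrow> complex"
  shows "(\<Sum>x\<in>X. \<Sum>y\<in>Y. (h x * (C - o1 x * A - o2 x * B)) * M x y * g y)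
   = C * (\<Sum>x\<in>X. \<Sum>y\<in>Y. h x * M x y * g y) - A * (\<Sum>x\<in>X. \<Sum>y\<in>Y. (o1 x * h x) * M x y * g y)
     - B * (\<Sum>x\<in>X. \<Sum>y\<in>Y. (o2 x * h x) * M x y * g y)"
proof -
  have "\<And>x y. (h x * (C - o1 x * A - o2 x * B)) * M x y * g y = C * (h x * M x y * g y) - A * ((o1 x * h x) * M x y * g y) - B * ((o2 x * h x) * M x y * g y)"
    by (simp add: algebra_simps)
  then show ?thesis by (simp add: sum_subtractf sum_distrib_left)
qed

lemma Sb':
  assumes y: "y \<in> Bset n" and n: "n \<ge> 1"
  shows "b1 * b2 * (\<Sum>x\<in>Wset n. Kast n y x * pw b1 b2 x) = pw b1 b2 y *
    (Cfun b1 b2 - of_bool (fst y = 0) * (1 + \<i> * b2^2) - of_bool (fst y = 2 * int n) * (b1^2 * b2^2 + \<i> * b1^2))"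
proof -
  obtain c j where cj: "y = (2 * int c, 2 * int j + 1)" "c \<le> n" "j < n" using B_elem[OF y] by blast
  have "(fst y \<ge> 2) = (fst y \<noteq> 0)" "(fst y \<le> 2 * int n - 2) = (fst y \<noteq> 2 * int n)" using cj by auto
  moreover have "fst y = 0 \<Longrightarrow> fst y \<noteq> 2 * int n" using n by auto
  ultimately show ?thesis unfolding Sb_formula[OF y]
    by (cases "fst y = 0"; cases "fst y = 2 * int n") (simp_all add: Cfun_def algebra_simps)
qed

lemma Sw':
  assumes x: "x \<in> Wset n" and n: "n \<ge> 1"
  shows "w1 * w2 * (\<Sum>y\<in>Bset n. pw w1 w2 y * Kast n y x) = pw w1 w2 x *
    (Cfun w1 w2 - of_bool (snd x = 0) * (1 + \<i> * w1^2) - of_bool (snd x = 2 * int n) * (w1^2 * w2^2 + \<i> * w2^2))"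
proof -
  obtain a j where aj: "x = (2 * int a + 1, 2 * int j)" "a < n" "j \<le> n" using W_elem[OF x] by blast
  have "(snd x \<ge> 2) = (snd x \<noteq> 0)" "(snd x \<le> 2 * int n - 2) = (snd x \<noteq> 2 * int n)" using aj by auto
  moreover have "snd x = 0 \<Longrightarrow> snd x \<noteq> 2 * int n" using n by auto
  ultimately show ?thesis unfolding Sw_formula[OF x]
    by (cases "snd x = 0"; cases "snd x = 2 * int n") (simp_all add: Cfun_def algebra_simps)
qed



theorem lemma3p3:
  fixes n :: nat and w1 w2 b1 b2 :: complex
  assumes "n \<ge> 1"
    and "Cfun w1 w2 \<noteq> 0" and "Cfun b1 b2 \<noteq> 0"
  shows "Gn n w1 w2 b1 b2 =
      w1 * w2^2 * b2 * fpoly (n + 1) (w1^2 * b1^2) * fpoly n (w2^2 * b2^2) / Cfun w1 w2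
    + (1 + \<i> * w1^2) *
        ((1 + \<i> * b2^2) * Hn n 0 0 w1 w2 b1 b2
         + b1^2 * (b2 * w1 * fpoly n (b1^2 * w1^2) + (\<i> + b2^2) * Hn n 0 1 w1 w2 b1 b2))
        / (Cfun w1 w2 * Cfun b1 b2)
    + (\<i> + w1^2) * w2^2 *
        (b1^2 * b2^(2*n+1) * w1 * w2^(2*n) * fpoly n (b1^2 * w1^2)
         + (1 + \<i> * b2^2) * Hn n 1 0 w1 w2 b1 b2
         + b1^2 * (\<i> + b2^2) * Hn n 1 1 w1 w2 b1 b2)
        / (Cfun w1 w2 * Cfun b1 b2)"
proof -
  note n = assms(1)
  define M where "M = Kinv n"
  have KM: "is_Kinv n M" unfolding M_def by (rule Kinv_is)
  define F where "F = fpoly n (w1^2 * b1^2)"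
  define U where "U = fpoly n (w2^2 * b2^2)"
  define T where "T = (w1^2 * b1^2) ^ n"
  define V where "V = (w2^2 * b2^2) ^ n"
  define G where "G = (\<Sum>x\<in>Wset n. \<Sum>y\<in>Bset n. pw w1 w2 x * M x y * pw b1 b2 y)"
  define L0 where "L0 = (\<Sum>x\<in>Wset n. \<Sum>y\<in>Bset n. pw w1 w2 x * M x y * (of_bool (fst y = 0) * pw b1 b2 y))"
  define L2 where "L2 = (\<Sum>x\<in>Wset n. \<Sum>y\<in>Bset n. pw w1 w2 x * M x y * (of_bool (fst y = 2 * int n) * pw b1 b2 y))"
  define H :: "nat \<Rightarrow> nat \<Rightarrow> complex" where "H k l = (\<Sum>x\<in>Wset n. \<Sum>y\<in>Bset n.
      (of_bool (snd x = 2 * int (n * k)) * pw w1 w2 x) * M x y * (of_bool (fst y = 2 * int (n * l)) * pw b1 b2 y))" for k l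
  have HH: "Hn n 0 0 w1 w2 b1 b2 = H 0 0" "Hn n 0 1 w1 w2 b1 b2 = H 0 1"
     "Hn n 1 0 w1 w2 b1 b2 = H 1 0" "Hn n 1 1 w1 w2 b1 b2 = H 1 1"
    unfolding H_def M_def by (rule Hn_eq; simp)+
  have GG: "Gn n w1 w2 b1 b2 = G"
    unfolding Gn_def G_def pw_def M_def
    by (rule sum.cong[OF refl], rule sum.cong[OF refl]) (simp add: mult_ac)
  have TF: "T = 1 - (1 - w1^2*b1^2) * F" unfolding T_def F_def using fpoly_mul[of "w1^2*b1^2" n] by (simp add: algebra_simps)
  have VU: "V = 1 - (1 - w2^2*b2^2) * U" unfolding V_def U_def using fpoly_mul[of "w2^2*b2^2" n] by (simp add: algebra_simps)
  have E1: "Cfun b1 b2 * G - (1 + \<i> * b2^2) * L0 - (b1^2 * b2^2 + \<i> * b1^2) * L2 = b1 * b2 * (w1 * b1 * F * (U + V))"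
  proof -
    have "Cfun b1 b2 * G - (1 + \<i> * b2^2) * L0 - (b1^2 * b2^2 + \<i> * b1^2) * L2
      = (\<Sum>x\<in>Wset n. \<Sum>y\<in>Bset n. pw w1 w2 x * M x y * (pw b1 b2 y *
          (Cfun b1 b2 - of_bool (fst y = 0) * (1 + \<i> * b2^2) - of_bool (fst y = 2 * int n) * (b1^2 * b2^2 + \<i> * b1^2))))"
      unfolding G_def L0_def L2_def by (rule lin_B[symmetric])
    also have "\<dots> = (\<Sum>x\<in>Wset n. \<Sum>y\<in>Bset n. pw w1 w2 x * M x y * (b1 * b2 * (\<Sum>x'\<in>Wset n. Kast n y x' * pw b1 b2 x')))"
      by (rule sum.cong[OF refl], rule sum.cong[OF refl]) (simp add: Sb'[OF _ n])
    also have "\<dots> = b1 * b2 * (\<Sum>x\<in>Wset n. \<Sum>y\<in>Bset n. pw w1 w2 x * M x y * (\<Sum>x'\<in>Wset n. Kast n y x' * pw b1 b2 x'))"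
      by (simp add: sum_distrib_left mult_ac)
    also have "\<dots> = b1 * b2 * (\<Sum>x\<in>Wset n. pw w1 w2 x * pw b1 b2 x)"
      by (simp only: sideB[OF KM])
    also have "\<dots> = b1 * b2 * (w1 * b1 * F * (U + V))"
      by (simp add: PS1 F_def U_def V_def fpoly_Suc)
    finally show ?thesis .
  qed
  have E2gen: "Cfun w1 w2 * (\<Sum>x\<in>Wset n. \<Sum>y\<in>Bset n. pw w1 w2 x * M x y * (of_bool (fst y = 2 * int (n * l)) * pw b1 b2 y))
     - (1 + \<i> * w1^2) * H 0 l - (w1^2 * w2^2 + \<i> * w2^2) * H 1 l
     = w1 * w2 * ((w1^2 * b1^2)^(n * l) * (w2 * b2 * U))" if m: "n * l \<le> n" for l
  proof -
    let ?g = "\<lambda>y. of_bool (fst y = 2 * int (n * l)) * pw b1 b2 y"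
    have "Cfun w1 w2 * (\<Sum>x\<in>Wset n. \<Sum>y\<in>Bset n. pw w1 w2 x * M x y * ?g y)
     - (1 + \<i> * w1^2) * H 0 l - (w1^2 * w2^2 + \<i> * w2^2) * H 1 l
     = (\<Sum>x\<in>Wset n. \<Sum>y\<in>Bset n. (pw w1 w2 x *
          (Cfun w1 w2 - of_bool (snd x = 0) * (1 + \<i> * w1^2) - of_bool (snd x = 2 * int n) * (w1^2 * w2^2 + \<i> * w2^2))) * M x y * ?g y)"
      unfolding H_def by (subst lin_A) simp
    also have "\<dots> = (\<Sum>x\<in>Wset n. \<Sum>y\<in>Bset n. (w1 * w2 * (\<Sum>y'\<in>Bset n. pw w1 w2 y' * Kast n y' x)) * M x y * ?g y)"
      by (rule sum.cong[OF refl], rule sum.cong[OF refl]) (simp add: Sw'[OF _ n])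
    also have "\<dots> = w1 * w2 * (\<Sum>x\<in>Wset n. \<Sum>y\<in>Bset n. (\<Sum>y'\<in>Bset n. pw w1 w2 y' * Kast n y' x) * M x y * ?g y)"
      by (simp add: sum_distrib_left mult_ac)
    also have "\<dots> = w1 * w2 * (\<Sum>y\<in>Bset n. pw w1 w2 y * ?g y)"
      by (simp only: sideA[OF KM])
    also have "\<dots> = w1 * w2 * (\<Sum>y\<in>Bset n. of_bool (fst y = 2 * int (n * l)) * (pw w1 w2 y * pw b1 b2 y))"
      by (simp add: mult_ac)
    also have "\<dots> = w1 * w2 * ((w1^2 * b1^2)^(n * l) * (w2 * b2 * U))"
      by (simp only: PS2[OF m] U_def)
    finally show ?thesis .
  qed
  have E2: "Cfun w1 w2 * L0 - (1 + \<i> * w1^2) * H 0 0 - (w1^2 * w2^2 + \<i> * w2^2) * H 1 0 = w1 * w2 * (w2 * b2 * U)"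
    using E2gen[of 0] unfolding L0_def by simp
  have E3: "Cfun w1 w2 * L2 - (1 + \<i> * w1^2) * H 0 1 - (w1^2 * w2^2 + \<i> * w2^2) * H 1 1 = w1 * w2 * (T * (w2 * b2 * U))"
    using E2gen[of 1] unfolding L2_def T_def by simp
  have fc: "G = w1 * w2^2 * b2 * (F + T) * U / Cfun w1 w2
    + (1 + \<i> * w1^2) * ((1 + \<i> * b2^2) * H 0 0 + b1^2 * (b2 * w1 * F + (\<i> + b2^2) * H 0 1)) / (Cfun w1 w2 * Cfun b1 b2)
    + (\<i> + w1^2) * w2^2 * (b1^2 * (b2 * V) * w1 * F + (1 + \<i> * b2^2) * H 1 0 + b1^2 * (\<i> + b2^2) * H 1 1) / (Cfun w1 w2 * Cfun b1 b2)"
    by (rule final_combine[OF Cfun_def Cfun_def assms(2) assms(3) TF VU E1 E2 E3])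
  have X1: "fpoly (n + 1) (w1^2 * b1^2) = F + T" unfolding F_def T_def by (simp add: fpoly_Suc)
  have X2: "fpoly n (b1^2 * w1^2) = F" unfolding F_def by (simp add: mult.commute)
  have X3: "b1^2 * b2^(2*n+1) * w1 * w2^(2*n) * F = b1^2 * (b2 * V) * w1 * F"
    unfolding V_def by (simp add: power_add power_mult power_mult_distrib power2_eq_square mult_ac)
  show ?thesis unfolding GG HH X1 X2 X3 U_def[symmetric] by (rule fc)
qed


end
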